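(* Let $n\ge2$ and consider Gram blocks of a fully symmetric solution: $P_1,\dots,P_n\in\mathbb{R}^{d\times p}$ with $P_i^TP_i=G^A$ for all $i$ and $P_i^TP_j=G^C$ for all $i\ne j$, and let $G^T=\frac1n(G^A+(n-1)G^C)$. Let $\xi_{\bar x},\xi_x\in\mathbb{R}^p$, $\bar x_i=P_i\xi_{\bar x}$ and $x_i=P_i\xi_x$. Then the constraints $\bar x_i=\frac1n\sum_{j=1}^nx_j$ for all $i=1,\dots,n$ are equivalent to $\xi_{\bar x}^TG^A\xi_{\bar x}+\xi_x^TG^T(\xi_x-2\xi_{\bar x})=0$.
   Context: This arises in performance estimation problems for distributed optimization, where a point common to all agents (here the agent average $\bar x=\frac1n\sum_jx_j$) is copied into each agent's variables as $\bar x_i$. *)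

theory Defs
  imports "HOL-Analysis.Analysis"
begin

end

theory Submission
  imports Defs
begin

lemma inner_mv: "((A::real^'p^'d) *v u) \<bullet> (B *v v) = u \<bullet> ((transpose A ** B) *v v)"
  by (metis dot_lmul_matrix matrix_vector_mul_assoc transpose_matrix_vector transpose_transpose)

lemma sum_mv:
  fixes f :: "nat \<Rightarrow> real^'p^'p" and GA GC GT :: "real^'p^'p"
  assumes n2: "n \<ge> 2" and i: "i \<in> {1..n}"
    and fi: "f i = GA" and fj: "\<And>j. j \<in> {1..n} \<Longrightarrow> j \<noteq> i \<Longrightarrow> f j = GC"
    and hT: "GT = (1 / real n) *\<^sub>R (GA + (real n - 1) *\<^sub>R GC)"
  shows "(\<Sum>j=1..n. f j *v v) = real n *\<^sub>R (GT *v v)"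
proof -
  have "(\<Sum>j=1..n. f j *v v) = f i *v v + (\<Sum>j\<in>{1..n}-{i}. f j *v v)"
    using i by (simp add: sum.remove)
  also have "(\<Sum>j\<in>{1..n}-{i}. f j *v v) = (\<Sum>j\<in>{1..n}-{i}. GC *v v)"
    by (rule sum.cong) (auto simp: fj)
  also have "\<dots> = (real n - 1) *\<^sub>R (GC *v v)"
    using i n2 by (simp del: sum_constant add: sum_constant_scaleR of_nat_diff)
  finally have "(\<Sum>j=1..n. f j *v v) = GA *v v + (real n - 1) *\<^sub>R (GC *v v)" using fi by simp
  moreover have "real n *\<^sub>R (GT *v v) = GA *v v + (real n - 1) *\<^sub>R (GC *v v)"
    using n2 unfolding hT
    by (simp add: scaleR_matrix_vector_assoc[symmetric] matrix_vector_mult_add_rdistrib)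
  ultimately show ?thesis by simp
qed

theorem proposition11:
  fixes n :: nat
    and P :: "nat \<Rightarrow> real^'p^'d"
    and GA GC GT :: "real^'p^'p"
    and xi_xbar xi_x :: "real^'p"
    and xbar x :: "nat \<Rightarrow> real^'d"
  assumes n2: "n \<ge> 2"
    and hA: "\<forall>i\<in>{1..n}. transpose (P i) ** P i = GA"
    and hC: "\<forall>i\<in>{1..n}. \<forall>j\<in>{1..n}. i \<noteq> j \<longrightarrow> transpose (P i) ** P j = GC"
    and hT: "GT = (1 / real n) *\<^sub>R (GA + (real n - 1) *\<^sub>R GC)"
    and hxbar: "\<forall>i. xbar i = P i *v xi_xbar"
    and hx: "\<forall>i. x i = P i *v xi_x"
  shows "(\<forall>i\<in>{1..n}. xbar i = (1 / real n) *\<^sub>R (\<Sum>j=1..n. x j))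
     \<longleftrightarrow> xi_xbar \<bullet> (GA *v xi_xbar) + xi_x \<bullet> (GT *v (xi_x - 2 *\<^sub>R xi_xbar)) = 0"
proof -
  define a where "a = xi_xbar"
  define b where "b = xi_x"
  define m where "m = (1 / real n) *\<^sub>R (\<Sum>j=1..n. x j)"
  define E where "E = xi_xbar \<bullet> (GA *v xi_xbar) + xi_x \<bullet> (GT *v (xi_x - 2 *\<^sub>R xi_xbar))"
  have npos: "real n > 0" using n2 by simp
  have S1: "(\<Sum>j=1..n. (transpose (P j) ** P i) *v v) = real n *\<^sub>R (GT *v v)" if i: "i \<in> {1..n}" for i v
    by (rule sum_mv[OF n2 i _ _ hT]) (use hA hC i in auto)
  have S2: "(\<Sum>j=1..n. (transpose (P i) ** P j) *v v) = real n *\<^sub>R (GT *v v)" if i: "i \<in> {1..n}" for i v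
    by (rule sum_mv[OF n2 i _ _ hT]) (use hA hC i in auto)
  have key: "(xbar i - m) \<bullet> (xbar i - m) = E" if i: "i \<in> {1..n}" for i
  proof -
    have uu: "xbar i \<bullet> xbar i = a \<bullet> (GA *v a)"
      using hA i by (simp add: hxbar inner_mv a_def)
    have "m \<bullet> xbar i = (1 / real n) * (\<Sum>j=1..n. x j \<bullet> xbar i)"
      by (simp add: m_def inner_sum_left)
    also have "(\<Sum>j=1..n. x j \<bullet> xbar i) = (\<Sum>j=1..n. b \<bullet> ((transpose (P j) ** P i) *v a))"
      by (simp add: hx hxbar inner_mv a_def b_def)
    also have "\<dots> = b \<bullet> (\<Sum>j=1..n. (transpose (P j) ** P i) *v a)"
      by (simp add: inner_sum_right)
    also have "\<dots> = real n * (b \<bullet> (GT *v a))" unfolding S1[OF i] by simp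
    finally have mu: "m \<bullet> xbar i = b \<bullet> (GT *v a)" using npos by simp
    have "m \<bullet> m = (1 / real n) * (\<Sum>j=1..n. x j \<bullet> m)"
      by (subst (1) m_def) (simp only: inner_scaleR_left inner_sum_left)
    also have "(\<Sum>j=1..n. x j \<bullet> m) = (\<Sum>j=1..n. b \<bullet> (GT *v b))"
    proof (rule sum.cong[OF refl])
      fix j assume j: "j \<in> {1..n}"
      have "x j \<bullet> m = (1 / real n) * (\<Sum>k=1..n. x j \<bullet> x k)"
        by (simp add: m_def inner_sum_right)
      also have "(\<Sum>k=1..n. x j \<bullet> x k) = (\<Sum>k=1..n. b \<bullet> ((transpose (P j) ** P k) *v b))"
        by (simp add: hx inner_mv b_def)
      also have "\<dots> = b \<bullet> (\<Sum>k=1..n. (transpose (P j) ** P k) *v b)"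
        by (simp add: inner_sum_right)
      also have "\<dots> = real n * (b \<bullet> (GT *v b))" unfolding S2[OF j] by simp
      finally show "x j \<bullet> m = b \<bullet> (GT *v b)" using npos by simp
    qed
    also have "\<dots> = real n * (b \<bullet> (GT *v b))" by simp
    finally have mm: "m \<bullet> m = b \<bullet> (GT *v b)" using npos by simp
    have "(xbar i - m) \<bullet> (xbar i - m) = xbar i \<bullet> xbar i - 2 * (m \<bullet> xbar i) + m \<bullet> m"
      by (simp add: inner_diff_left inner_diff_right inner_commute)
    also have "\<dots> = E"
      unfolding uu mu mm E_def a_def b_def
      by (simp add: matrix_vector_mult_diff_distrib matrix_vector_mult_scaleR inner_diff_right)
    finally show ?thesis .
  qed
  show ?thesis
  proof
    assume h: "\<forall>i\<in>{1..n}. xbar i = (1 / real n) *\<^sub>R (\<Sum>j=1..n. x j)"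
    have "1 \<in> {1..n}" using n2 by simp
    with key[OF this] h show "xi_xbar \<bullet> (GA *v xi_xbar) + xi_x \<bullet> (GT *v (xi_x - 2 *\<^sub>R xi_xbar)) = 0"
      by (simp add: m_def E_def)
  next
    assume "xi_xbar \<bullet> (GA *v xi_xbar) + xi_x \<bullet> (GT *v (xi_x - 2 *\<^sub>R xi_xbar)) = 0"
    hence "E = 0" by (simp add: E_def)
    thus "\<forall>i\<in>{1..n}. xbar i = (1 / real n) *\<^sub>R (\<Sum>j=1..n. x j)"
      using key unfolding m_def[symmetric] by simp
  qed
qed

end
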